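(* Let $d\ge 5$ and let $\mathcal A_1,\dots,\mathcal A_d\subset 2^{[n]}$ be pairwise cross-IU families (for all $i\ne j$ and all $A\in\mathcal A_i$, $B\in\mathcal A_j$: $A\cap B\neq\emptyset$ and $A\cup B\neq[n]$) with $|\mathcal A_1|\ge|\mathcal A_2|\ge\dots\ge|\mathcal A_d|$. Then $$|\mathcal A_1|+\dots+|\mathcal A_d|\le d\,2^{n-2}.$$ Moreover, the inequality is strict unless $\mathcal A_1=\dots=\mathcal A_d$.
   Context: $[n]=\{1,\dots,n\}$ and $2^{[n]}$ is its power set. *)

theory Defs
  imports Complex_Main
begin

definition cross_IU :: "nat \<Rightarrow> nat set set \<Rightarrow> nat set set \<Rightarrow> bool" where
  "cross_IU n \<A> \<B> \<longleftrightarrow>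
     (\<forall>A\<in>\<A>. \<forall>B\<in>\<B>. A \<inter> B \<noteq> {} \<and> A \<union> B \<noteq> {1..n})"

end

theory Submission
  imports Defs
begin

lemma card_split:
  assumes "finite X" "x \<notin> X" "F \<subseteq> Pow (insert x X)"
  shows "card F = card (F \<inter> Pow X) + card {S \<in> Pow X. insert x S \<in> F}"
proof -
  have eq: "F = (F \<inter> Pow X) \<union> insert x ` {S \<in> Pow X. insert x S \<in> F}"
  proof
    show "F \<subseteq> (F \<inter> Pow X) \<union> insert x ` {S \<in> Pow X. insert x S \<in> F}"
    proof
      fix S assume S: "S \<in> F"
      show "S \<in> (F \<inter> Pow X) \<union> insert x ` {S \<in> Pow X. insert x S \<in> F}"
      proof (cases "x \<in> S")
        case True
        then have "S = insert x (S - {x})" by auto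
        moreover have "S - {x} \<in> Pow X" using S assms(3) by auto
        ultimately show ?thesis using S by (metis (mono_tags, lifting) UnI2 image_eqI mem_Collect_eq)
      next
        case False
        then show ?thesis using S assms(3) by auto
      qed
    qed
  qed auto
  have disj: "(F \<inter> Pow X) \<inter> insert x ` {S \<in> Pow X. insert x S \<in> F} = {}"
    using assms(2) by auto
  have inj: "inj_on (insert x) {S \<in> Pow X. insert x S \<in> F}"
    using assms(2) by (auto simp: inj_on_def)
  have fin: "finite F" using assms by (meson finite_Pow_iff finite_insert rev_finite_subset)
  have "card F = card (F \<inter> Pow X) + card (insert x ` {S \<in> Pow X. insert x S \<in> F})"
    by (subst eq, rule card_Un_disjoint) (use fin assms(1) disj in auto)
  also have "\<dots> = card (F \<inter> Pow X) + card {S \<in> Pow X. insert x S \<in> F}"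
    using card_image[OF inj] by simp
  finally show ?thesis .
qed

lemma arith_kl:
  fixes u0 u1 d0 d1 c0 c1 k :: nat
  assumes "c0 * k \<le> u0 * d0" "c1 * k \<le> u1 * d1" "u0 \<le> u1" "d1 \<le> d0"
  shows "(c0 + c1) * (2 * k) \<le> (u0 + u1) * (d0 + d1)"
proof -
  obtain p q where p: "u1 = u0 + p" and q: "d0 = d1 + q"
    using assms(3,4) le_Suc_ex by blast
  have "(c0 + c1) * (2 * k) = 2 * (c0 * k) + 2 * (c1 * k)" by (simp add: algebra_simps)
  also have "\<dots> \<le> 2 * (u0 * d0 + u1 * d1)" using add_mono[OF assms(1,2)] by simp
  also have "\<dots> + 0 \<le> 2 * (u0 * d0 + u1 * d1) + p * q" by simp
  also have "2 * (u0 * d0 + u1 * d1) + p * q = (u0 + u1) * (d0 + d1)" unfolding p q by (simp add: algebra_simps)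
  finally show ?thesis by simp
qed

lemma kleitman:
  assumes "finite X"
  shows "U \<subseteq> Pow X \<Longrightarrow> (\<forall>S T. S \<in> U \<longrightarrow> S \<subseteq> T \<longrightarrow> T \<subseteq> X \<longrightarrow> T \<in> U)
    \<Longrightarrow> D \<subseteq> Pow X \<Longrightarrow> (\<forall>S T. S \<in> D \<longrightarrow> T \<subseteq> S \<longrightarrow> T \<in> D)
    \<Longrightarrow> card (U \<inter> D) * 2 ^ card X \<le> card U * card D"
  using assms
proof (induction X arbitrary: U D rule: finite_induct)
  case empty
  then have "U \<subseteq> {{}}" "D \<subseteq> {{}}" by auto
  then have "U = {} \<or> U = {{}}" "D = {} \<or> D = {{}}" by (simp_all add: subset_singleton_iff)
  then show ?case by fastforce
next
  case (insert x X)
  define U0 where "U0 = U \<inter> Pow X"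
  define U1 where "U1 = {S \<in> Pow X. insert x S \<in> U}"
  define D0 where "D0 = D \<inter> Pow X"
  define D1 where "D1 = {S \<in> Pow X. insert x S \<in> D}"
  have cU: "card U = card U0 + card U1" unfolding U0_def U1_def
    using card_split[OF insert(1,2) insert(4)] .
  have cD: "card D = card D0 + card D1" unfolding D0_def D1_def
    using card_split[OF insert(1,2) insert(6)] .
  have cUD: "card (U \<inter> D) = card (U0 \<inter> D0) + card (U1 \<inter> D1)"
  proof -
    have "card (U \<inter> D) = card ((U \<inter> D) \<inter> Pow X) + card {S \<in> Pow X. insert x S \<in> U \<inter> D}"
      by (rule card_split[OF insert(1,2)]) (use insert(4) in auto)
    moreover have "(U \<inter> D) \<inter> Pow X = U0 \<inter> D0" unfolding U0_def D0_def by auto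
    moreover have "{S \<in> Pow X. insert x S \<in> U \<inter> D} = U1 \<inter> D1" unfolding U1_def D1_def by auto
    ultimately show ?thesis by simp
  qed
  have IH0: "card (U0 \<inter> D0) * 2 ^ card X \<le> card U0 * card D0"
  proof (rule insert.IH)
    show "U0 \<subseteq> Pow X" "D0 \<subseteq> Pow X" unfolding U0_def D0_def by auto
    show "\<forall>S T. S \<in> U0 \<longrightarrow> S \<subseteq> T \<longrightarrow> T \<subseteq> X \<longrightarrow> T \<in> U0"
      unfolding U0_def using insert.prems(2) by blast
    show "\<forall>S T. S \<in> D0 \<longrightarrow> T \<subseteq> S \<longrightarrow> T \<in> D0"
      unfolding D0_def using insert.prems(4) by blast
  qed
  have IH1: "card (U1 \<inter> D1) * 2 ^ card X \<le> card U1 * card D1"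
  proof (rule insert.IH)
    show "U1 \<subseteq> Pow X" "D1 \<subseteq> Pow X" unfolding U1_def D1_def by auto
    show "\<forall>S T. S \<in> U1 \<longrightarrow> S \<subseteq> T \<longrightarrow> T \<subseteq> X \<longrightarrow> T \<in> U1"
    proof (intro allI impI)
      fix S T assume "S \<in> U1" "S \<subseteq> T" "T \<subseteq> X"
      then have "insert x S \<in> U" "insert x S \<subseteq> insert x T" "insert x T \<subseteq> insert x X"
        unfolding U1_def by auto
      then have "insert x T \<in> U" using insert.prems(2) by blast
      then show "T \<in> U1" unfolding U1_def using \<open>T \<subseteq> X\<close> by simp
    qed
    show "\<forall>S T. S \<in> D1 \<longrightarrow> T \<subseteq> S \<longrightarrow> T \<in> D1"
    proof (intro allI impI)
      fix S T assume "S \<in> D1" "T \<subseteq> S"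
      then have "insert x S \<in> D" "insert x T \<subseteq> insert x S" "T \<subseteq> X"
        unfolding D1_def by auto
      then have "insert x T \<in> D" using insert.prems(4) by blast
      then show "T \<in> D1" unfolding D1_def using \<open>T \<subseteq> X\<close> by simp
    qed
  qed
  have finX: "finite (Pow X)" using insert(1) by simp
  have "U0 \<subseteq> U1"
  proof
    fix S assume "S \<in> U0"
    then have "S \<in> U" "S \<subseteq> X" unfolding U0_def by auto
    moreover have "S \<subseteq> insert x S" "insert x S \<subseteq> insert x X" using \<open>S \<subseteq> X\<close> by auto
    ultimately have "insert x S \<in> U" using insert.prems(2) by blast
    then show "S \<in> U1" unfolding U1_def using \<open>S \<subseteq> X\<close> by simp
  qed
  then have u: "card U0 \<le> card U1" by (rule card_mono[rotated]) (auto simp: U1_def intro: rev_finite_subset[OF finX])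
  have "D1 \<subseteq> D0" unfolding D0_def D1_def using insert.prems(4) by auto
  then have dd: "card D1 \<le> card D0" by (rule card_mono[rotated]) (auto simp: D0_def intro: rev_finite_subset[OF finX])
  have "card (U \<inter> D) * 2 ^ card (insert x X) = (card (U0 \<inter> D0) + card (U1 \<inter> D1)) * (2 * 2 ^ card X)"
    using insert(1,2) cUD by simp
  also have "\<dots> \<le> (card U0 + card U1) * (card D0 + card D1)"
    by (rule arith_kl[OF IH0 IH1 u dd])
  finally show ?case using cU cD by simp
qed

lemma compl_bound:
  assumes "finite X" "F \<subseteq> Pow X" "G \<subseteq> Pow X" "\<forall>S\<in>F. X - S \<notin> G"
  shows "card F + card G \<le> 2 ^ card X"
proof -
  have inj: "inj_on (\<lambda>S. X - S) G"
    using assms(3) by (auto simp: inj_on_def)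
  have disj: "F \<inter> (\<lambda>S. X - S) ` G = {}"
  proof (rule ccontr)
    assume "F \<inter> (\<lambda>S. X - S) ` G \<noteq> {}"
    then obtain T where T: "T \<in> G" "X - T \<in> F" by blast
    then have "X - (X - T) = T" using assms(3) by auto
    then show False using assms(4) T by metis
  qed
  have finP: "finite (Pow X)" using assms(1) by simp
  have "card F + card G = card F + card ((\<lambda>S. X - S) ` G)" using card_image[OF inj] by simp
  also have "\<dots> = card (F \<union> (\<lambda>S. X - S) ` G)"
    by (rule card_Un_disjoint[symmetric]) (use finite_subset[OF assms(2) finP] finite_subset[OF assms(3) finP] disj in auto)
  also have "\<dots> \<le> card (Pow X)" by (rule card_mono[OF finP]) (use assms in auto)
  also have "\<dots> = 2 ^ card X" using assms(1) by (simp add: card_Pow)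
  finally show ?thesis .
qed

lemma amgm: fixes u v :: real shows "4 * (u * v) \<le> (u + v) ^ 2"
proof -
  have "0 \<le> (u - v) ^ 2" by simp
  then show ?thesis by (simp add: power2_eq_square algebra_simps)
qed
lemma arith_prod:
  fixes a b uA uB dA dB N :: real
  assumes "0 \<le> a" "0 \<le> b" "0 \<le> uA" "0 \<le> uB" "0 \<le> dA" "0 \<le> dB" "0 < N"
    "a * N \<le> uA * dA" "b * N \<le> uB * dB" "uA + uB \<le> N" "dA + dB \<le> N"
  shows "16 * (a * b) \<le> N ^ 2"
proof -
  have u: "4 * (uA * uB) \<le> N ^ 2"
    using amgm[of uA uB] power_mono[OF assms(10), of 2] assms(3,4) by linarith
  have d: "4 * (dA * dB) \<le> N ^ 2"
    using amgm[of dA dB] power_mono[OF assms(11), of 2] assms(5,6) by linarith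
  have "(a * N) * (b * N) \<le> (uA * dA) * (uB * dB)"
    by (rule mult_mono) (use assms in auto)
  moreover have "(a * N) * (b * N) = (a * b) * N ^ 2" by (simp add: power2_eq_square)
  moreover have "(uA * dA) * (uB * dB) = (uA * uB) * (dA * dB)" by simp
  ultimately have "(a * b) * N ^ 2 \<le> (uA * uB) * (dA * dB)" by simp
  then have "16 * ((a * b) * N ^ 2) \<le> (4 * (uA * uB)) * (4 * (dA * dB))" by simp
  also have "\<dots> \<le> N ^ 2 * N ^ 2" by (rule mult_mono) (use u d assms in auto)
  finally have "(16 * (a * b)) * N ^ 2 \<le> N ^ 2 * N ^ 2" by simp
  then show ?thesis by (rule mult_right_le_imp_le) (use assms(7) in simp)
qed

lemma prod_bound:
  assumes "finite X" "A \<subseteq> Pow X" "B \<subseteq> Pow X"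
    "\<forall>S\<in>A. \<forall>T\<in>B. S \<inter> T \<noteq> {} \<and> S \<union> T \<noteq> X"
  shows "16 * (real (card A) * real (card B)) \<le> (2 ^ card X) ^ 2"
proof -
  define UA where "UA = {T. T \<subseteq> X \<and> (\<exists>S\<in>A. S \<subseteq> T)}"
  define UB where "UB = {T. T \<subseteq> X \<and> (\<exists>S\<in>B. S \<subseteq> T)}"
  define DA where "DA = {T. \<exists>S\<in>A. T \<subseteq> S}"
  define DB where "DB = {T. \<exists>S\<in>B. T \<subseteq> S}"
  have finP: "finite (Pow X)" using assms(1) by simp
  have sUA: "UA \<subseteq> Pow X" "UB \<subseteq> Pow X" unfolding UA_def UB_def by auto
  have sDA: "DA \<subseteq> Pow X" "DB \<subseteq> Pow X" unfolding DA_def DB_def using assms(2,3) by auto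
  have finA: "finite A" "finite B" using finite_subset[OF assms(2) finP] finite_subset[OF assms(3) finP] by auto
  have kA: "card (UA \<inter> DA) * 2 ^ card X \<le> card UA * card DA"
    by (rule kleitman[OF assms(1) sUA(1) _ sDA(1)]) (unfold UA_def DA_def, blast+)
  have kB: "card (UB \<inter> DB) * 2 ^ card X \<le> card UB * card DB"
    by (rule kleitman[OF assms(1) sUA(2) _ sDA(2)]) (unfold UB_def DB_def, blast+)
  have "A \<subseteq> UA \<inter> DA" unfolding UA_def DA_def using assms(2) by auto
  moreover have "finite (UA \<inter> DA)" using finite_subset[OF sUA(1) finP] by simp
  ultimately have "card A \<le> card (UA \<inter> DA)" by (intro card_mono)
  then have kA': "card A * 2 ^ card X \<le> card UA * card DA"
    by (rule le_trans[OF mult_le_mono1 kA])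
  have "B \<subseteq> UB \<inter> DB" unfolding UB_def DB_def using assms(3) by auto
  moreover have "finite (UB \<inter> DB)" using finite_subset[OF sUA(2) finP] by simp
  ultimately have "card B \<le> card (UB \<inter> DB)" by (intro card_mono)
  then have kB': "card B * 2 ^ card X \<le> card UB * card DB"
    by (rule le_trans[OF mult_le_mono1 kB])
  have cU: "card UA + card UB \<le> 2 ^ card X"
  proof (rule compl_bound[OF assms(1) sUA])
    show "\<forall>S\<in>UA. X - S \<notin> UB"
    proof (intro ballI notI)
      fix S assume "S \<in> UA" "X - S \<in> UB"
      then obtain S1 T1 where "S1 \<in> A" "S1 \<subseteq> S" "T1 \<in> B" "T1 \<subseteq> X - S"
        unfolding UA_def UB_def by auto
      then have "S1 \<inter> T1 = {}" by auto
      then show False using assms(4) \<open>S1 \<in> A\<close> \<open>T1 \<in> B\<close> by blast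
    qed
  qed
  have cD: "card DA + card DB \<le> 2 ^ card X"
  proof (rule compl_bound[OF assms(1) sDA])
    show "\<forall>S\<in>DA. X - S \<notin> DB"
    proof (intro ballI notI)
      fix S assume "S \<in> DA" "X - S \<in> DB"
      then obtain S1 T1 where "S1 \<in> A" "S \<subseteq> S1" "T1 \<in> B" "X - S \<subseteq> T1"
        unfolding DA_def DB_def by auto
      moreover have "S1 \<subseteq> X" "T1 \<subseteq> X" using calculation assms(2,3) by auto
      ultimately have "S1 \<union> T1 = X" by auto
      then show False using assms(4) \<open>S1 \<in> A\<close> \<open>T1 \<in> B\<close> by blast
    qed
  qed
  have rA: "real (card A * 2 ^ card X) \<le> real (card UA * card DA)" using kA' by (simp only: of_nat_le_iff)
  have rB: "real (card B * 2 ^ card X) \<le> real (card UB * card DB)" using kB' by (simp only: of_nat_le_iff)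
  have rU: "real (card UA + card UB) \<le> real (2 ^ card X)" using cU by (simp only: of_nat_le_iff)
  have rD: "real (card DA + card DB) \<le> real (2 ^ card X)" using cD by (simp only: of_nat_le_iff)
  show ?thesis
    apply (rule arith_prod[where uA="real (card UA)" and uB="real (card UB)"
          and dA="real (card DA)" and dB="real (card DB)"])
    using rA rB rU rD by simp_all
qed

lemma sum_bound2:
  assumes "finite X" "A \<subseteq> Pow X" "B \<subseteq> Pow X"
    "\<forall>S\<in>A. \<forall>T\<in>B. S \<inter> T \<noteq> {}"
  shows "card A + card B \<le> 2 ^ card X"
  by (rule compl_bound[OF assms(1-3)]) (use assms(4) in blast)

lemma num:
  fixes a x m d :: real
  assumes "0 < m" "0 \<le> x" "x \<le> a" "a * x \<le> m ^ 2" "a + x \<le> 4 * m" "5 \<le> d"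
  shows "a + (d - 1) * x \<le> d * m \<and> (a + (d - 1) * x = d * m \<longrightarrow> a = m \<and> x = m)"
proof -
  have xm: "x \<le> m"
  proof (rule ccontr)
    assume "\<not> x \<le> m"
    then have "m * m < x * x" using assms by (intro mult_strict_mono) auto
    also have "\<dots> \<le> a * x" using assms by (intro mult_right_mono) auto
    finally show False using assms(4) by (simp add: power2_eq_square)
  qed
  have key: "a + 4 * x \<le> 5 * m \<and> (a + 4 * x = 5 * m \<longrightarrow> a = m \<and> x = m)"
  proof (cases "4 * x \<le> m")
    case True
    then show ?thesis using assms by linarith
  next
    case False
    then have xp: "0 < x" using assms by linarith
    have "x * (a + 4 * x) = a * x + 4 * x * x" by (simp add: algebra_simps)
    also have "\<dots> \<le> m ^ 2 + 4 * x * x" using assms by simp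
    finally have h: "x * (a + 4 * x) \<le> m ^ 2 + 4 * x * x" .
    have p: "0 \<le> (4 * x - m) * (m - x)" using False xm by (intro mult_nonneg_nonneg) auto
    have h2: "x * (a + 4 * x) \<le> x * (5 * m)"
      using h p by (simp add: algebra_simps power2_eq_square)
    then have le: "a + 4 * x \<le> 5 * m" using xp by simp
    moreover have "a = m \<and> x = m" if eq: "a + 4 * x = 5 * m"
    proof -
      have "x * (5 * m) \<le> m ^ 2 + 4 * x * x" using h eq by simp
      then have "(4 * x - m) * (m - x) \<le> 0" by (simp add: algebra_simps power2_eq_square)
      then have "(4 * x - m) * (m - x) = 0" using p by linarith
      then have "x = m" using False by simp
      then show ?thesis using eq by simp
    qed
    ultimately show ?thesis by blast
  qed
  have "a + (d - 1) * x - d * m = (a + 4 * x - 5 * m) + (d - 5) * (x - m)" by (simp add: algebra_simps)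
  moreover have "(d - 5) * (x - m) \<le> 0" using assms(6) xm by (simp add: mult_nonneg_nonpos)
  ultimately show ?thesis using key by auto
qed

lemma cross_sym: "cross_IU n F G \<Longrightarrow> cross_IU n G F"
  unfolding cross_IU_def by (metis Int_commute Un_commute)

lemma cross_Un: "cross_IU n F1 G \<Longrightarrow> cross_IU n F2 G \<Longrightarrow> cross_IU n (F1 \<union> F2) G"
  unfolding cross_IU_def by blast

lemma cross_Int: "cross_IU n F1 G \<Longrightarrow> cross_IU n (F1 \<inter> F2) G"
  unfolding cross_IU_def by blast

lemma cross_UI: "cross_IU n F G \<Longrightarrow> cross_IU n (F \<union> G) (F \<inter> G)"
  unfolding cross_IU_def by (metis Int_commute Un_commute IntD1 IntD2 UnE)

lemma bound:
  fixes n d :: nat and \<A> :: "nat \<Rightarrow> nat set set"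
  assumes "d \<ge> 5"
    and sub: "\<And>i. i \<in> {1..d} \<Longrightarrow> \<A> i \<subseteq> Pow {1..n}"
    and cr: "\<And>i j. i \<in> {1..d} \<Longrightarrow> j \<in> {1..d} \<Longrightarrow> i \<noteq> j \<Longrightarrow> cross_IU n (\<A> i) (\<A> j)"
  shows "(\<Sum>i=1..d. real (card (\<A> i))) \<le> real d * 2 ^ n / 4
    \<and> ((\<Sum>i=1..d. real (card (\<A> i))) = real d * 2 ^ n / 4 \<longrightarrow> (\<forall>i\<in>{1..d}. real (card (\<A> i)) = 2 ^ n / 4))"
proof -
  define I where "I = {1..d}"
  define f where "f i = real (card (\<A> i))" for i
  define m :: real where "m = 2 ^ n / 4"
  have m0: "0 < m" unfolding m_def by simp
  have finI: "finite I" unfolding I_def by simp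
  have cI: "card I = d" unfolding I_def by simp
  have pw: "f i * f j \<le> m ^ 2 \<and> f i + f j \<le> 4 * m" if "i \<in> I" "j \<in> I" "i \<noteq> j" for i j
  proof -
    have c: "\<forall>S\<in>\<A> i. \<forall>T\<in>\<A> j. S \<inter> T \<noteq> {} \<and> S \<union> T \<noteq> {1..n}"
      using cr[of i j] that unfolding I_def cross_IU_def by blast
    have s: "\<A> i \<subseteq> Pow {1..n}" "\<A> j \<subseteq> Pow {1..n}" using sub that unfolding I_def by auto
    have "16 * (f i * f j) \<le> (2 ^ n) ^ 2" using prod_bound[OF _ s c] unfolding f_def by simp
    moreover have "card (\<A> i) + card (\<A> j) \<le> 2 ^ n" using sum_bound2[OF _ s] c by simp
    then have "real (card (\<A> i) + card (\<A> j)) \<le> real (2 ^ n)" by (simp only: of_nat_le_iff)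
    then have "f i + f j \<le> 2 ^ n" unfolding f_def by simp
    ultimately show ?thesis unfolding m_def by (simp add: power2_eq_square)
  qed
  have ne: "I \<noteq> {}" using assms(1) cI by auto
  have "Max (f ` I) \<in> f ` I" using finI ne by simp
  then obtain p where p0: "p \<in> I" "f p = Max (f ` I)" by auto
  have p: "p \<in> I" "\<forall>i\<in>I. f i \<le> f p" using p0 finI by auto
  have cI2: "card (I - {p}) = d - 1" using cI p(1) finI by simp
  have ne2: "I - {p} \<noteq> {}" using assms(1) cI2 by (intro notI) simp
  have "Max (f ` (I - {p})) \<in> f ` (I - {p})" using finI ne2 by simp
  then obtain q where q0: "q \<in> I - {p}" "f q = Max (f ` (I - {p}))" by (metis imageE)
  have q: "q \<in> I - {p}" "\<forall>i\<in>I - {p}. f i \<le> f q" using q0 finI by auto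
  have qp: "q \<in> I" "q \<noteq> p" using q by auto
  have sum_split: "(\<Sum>i\<in>I. f i) = f p + (\<Sum>i\<in>I - {p}. f i)" using finI p(1) by (simp add: sum.remove)
  have rest: "(\<Sum>i\<in>I - {p}. f i) \<le> (real d - 1) * f q"
  proof -
    have "(\<Sum>i\<in>I - {p}. f i) \<le> (\<Sum>i\<in>I - {p}. f q)" using q(2) by (intro sum_mono) auto
    also have "\<dots> = (real d - 1) * f q" using cI2 assms(1) by (simp add: of_nat_diff)
    finally show ?thesis .
  qed
  have f0: "0 \<le> f q" unfolding f_def by simp
  have N: "f p + (real d - 1) * f q \<le> real d * m \<and> (f p + (real d - 1) * f q = real d * m \<longrightarrow> f p = m \<and> f q = m)"
    using num[OF m0 f0 p(2)[rule_format, OF qp(1)], of "real d"] pw[OF p(1) qp(1) qp(2)[symmetric]] assms(1)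
    by (simp add: mult.commute)
  have le: "(\<Sum>i\<in>I. f i) \<le> real d * m" using sum_split rest N by linarith
  moreover have "\<forall>i\<in>I. f i = m" if eq: "(\<Sum>i\<in>I. f i) = real d * m"
  proof -
    have e2: "f p + (real d - 1) * f q = real d * m" using eq sum_split rest N by linarith
    then have fp: "f p = m" and fq: "f q = m" using N by auto
    show ?thesis
    proof
      fix i assume i: "i \<in> I"
      show "f i = m"
      proof (cases "i = p")
        case True then show ?thesis using fp by simp
      next
        case False
        then have ii: "i \<in> I - {p}" using i by simp
        show ?thesis
        proof (rule ccontr)
          assume "f i \<noteq> m"
          then have "f i < f q" using q(2) ii fq by force
          then have "(\<Sum>i\<in>I - {p}. f i) < (\<Sum>i\<in>I - {p}. f q)"
            using q(2) finI ii by (intro sum_strict_mono_ex1) auto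
          also have "\<dots> = (real d - 1) * f q" using cI2 assms(1) by (simp add: of_nat_diff)
          finally show False using e2 eq sum_split by linarith
        qed
      qed
    qed
  qed
  ultimately show ?thesis unfolding I_def f_def m_def by (simp only: times_divide_eq_right) blast
qed

theorem corollary3p2:
  fixes n d :: nat and \<A> :: "nat \<Rightarrow> nat set set"
  assumes "d \<ge> 5"
    and "\<And>i. i \<in> {1..d} \<Longrightarrow> \<A> i \<subseteq> Pow {1..n}"
    and "\<And>i j. i \<in> {1..d} \<Longrightarrow> j \<in> {1..d} \<Longrightarrow> i \<noteq> j \<Longrightarrow> cross_IU n (\<A> i) (\<A> j)"
    and "\<And>i j. i \<in> {1..d} \<Longrightarrow> j \<in> {1..d} \<Longrightarrow> i \<le> j \<Longrightarrow> card (\<A> j) \<le> card (\<A> i)"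
  shows "(\<Sum>i=1..d. real (card (\<A> i))) \<le> real d * 2 ^ n / 4
         \<and> ((\<Sum>i=1..d. real (card (\<A> i))) < real d * 2 ^ n / 4
         \<or> (\<forall>i\<in>{1..d}. \<forall>j\<in>{1..d}. \<A> i = \<A> j))"
proof -
  have Bd: "(\<Sum>i=1..d. real (card (\<A> i))) \<le> real d * 2 ^ n / 4
    \<and> ((\<Sum>i=1..d. real (card (\<A> i))) = real d * 2 ^ n / 4 \<longrightarrow> (\<forall>i\<in>{1..d}. real (card (\<A> i)) = 2 ^ n / 4))"
    by (rule bound[where d=d and n=n and \<A>=\<A>]) (use assms in auto)
  have "\<forall>i\<in>{1..d}. \<forall>j\<in>{1..d}. \<A> i = \<A> j"
    if eq: "(\<Sum>i=1..d. real (card (\<A> i))) = real d * 2 ^ n / 4"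
  proof (rule ccontr)
    assume "\<not> (\<forall>i\<in>{1..d}. \<forall>j\<in>{1..d}. \<A> i = \<A> j)"
    then obtain i j where ij: "i \<in> {1..d}" "j \<in> {1..d}" "\<A> i \<noteq> \<A> j" by blast
    then have ne: "i \<noteq> j" by auto
    define B where "B = \<A>(i := \<A> i \<union> \<A> j, j := \<A> i \<inter> \<A> j)"
    have Bi: "B i = \<A> i \<union> \<A> j" and Bj: "B j = \<A> i \<inter> \<A> j" and Bk: "\<And>k. k \<noteq> i \<Longrightarrow> k \<noteq> j \<Longrightarrow> B k = \<A> k"
      unfolding B_def using ne by auto
    have finA: "finite (\<A> k)" if "k \<in> {1..d}" for k
      using assms(2)[OF that] by (meson finite_Pow_iff finite_atLeastAtMost rev_finite_subset)
    have subB: "B k \<subseteq> Pow {1..n}" if "k \<in> {1..d}" for k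
      using assms(2) that ij unfolding B_def by auto
    have h1: "cross_IU n (B k) (B l)" if "k \<in> {1..d}" "l \<in> {1..d}" "k \<noteq> l" "l \<noteq> i" "l \<noteq> j" for k l
    proof -
      have Bl: "B l = \<A> l" using Bk that by simp
      show ?thesis
      proof (cases "k = i")
        case True
        have "cross_IU n (\<A> i \<union> \<A> j) (\<A> l)" by (rule cross_Un) (use assms(3) that ij in auto)
        then show ?thesis using True Bi Bl by simp
      next
        case False
        show ?thesis
        proof (cases "k = j")
          case True
          have "cross_IU n (\<A> i \<inter> \<A> j) (\<A> l)" by (rule cross_Int) (use assms(3) that ij in auto)
          then show ?thesis using True Bj Bl by simp
        next
          case False
          then show ?thesis using Bk[of k] \<open>k \<noteq> i\<close> Bl assms(3) that by simp
        qed
      qed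
    qed
    have h2: "cross_IU n (B i) (B j)" unfolding Bi Bj by (rule cross_UI[OF assms(3)[OF ij(1,2) ne]])
    have crB: "cross_IU n (B k) (B l)" if "k \<in> {1..d}" "l \<in> {1..d}" and kl: "k \<noteq> l" for k l
    proof -
      consider "l \<noteq> i \<and> l \<noteq> j" | "k \<noteq> i \<and> k \<noteq> j" | "k = i \<and> l = j" | "k = j \<and> l = i"
        using kl by fastforce
      then show ?thesis
      proof cases
        case 1 then show ?thesis using h1 that by blast
      next
        case 2 then show ?thesis using h1[of l k] that cross_sym by metis
      next
        case 3 then show ?thesis using h2 by simp
      next
        case 4 then show ?thesis using h2 cross_sym by simp
      qed
    qed
    have cUI: "card (\<A> i \<union> \<A> j) + card (\<A> i \<inter> \<A> j) = card (\<A> i) + card (\<A> j)"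
      using card_Un_Int[OF finA[OF ij(1)] finA[OF ij(2)]] by simp
    have sumB: "(\<Sum>k=1..d. real (card (B k))) = (\<Sum>k=1..d. real (card (\<A> k)))"
    proof -
      have e1: "(\<Sum>k=1..d. real (card (B k))) = real (card (B i)) + (\<Sum>k\<in>{1..d} - {i}. real (card (B k)))"
        by (rule sum.remove) (use ij(1) in auto)
      have e2: "(\<Sum>k\<in>{1..d} - {i}. real (card (B k))) = real (card (B j)) + (\<Sum>k\<in>{1..d} - {i} - {j}. real (card (B k)))"
        by (rule sum.remove) (use ij(2) ne in auto)
      have e3: "(\<Sum>k\<in>{1..d} - {i} - {j}. real (card (B k))) = (\<Sum>k\<in>{1..d} - {i} - {j}. real (card (\<A> k)))"
        using Bk by (intro sum.cong) auto
      have e4: "(\<Sum>k=1..d. real (card (\<A> k))) = real (card (\<A> i)) + (\<Sum>k\<in>{1..d} - {i}. real (card (\<A> k)))"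
        by (rule sum.remove) (use ij(1) in auto)
      have e5: "(\<Sum>k\<in>{1..d} - {i}. real (card (\<A> k))) = real (card (\<A> j)) + (\<Sum>k\<in>{1..d} - {i} - {j}. real (card (\<A> k)))"
        by (rule sum.remove) (use ij(2) ne in auto)
      have e6: "real (card (B i)) + real (card (B j)) = real (card (\<A> i)) + real (card (\<A> j))"
        unfolding Bi Bj using arg_cong[OF cUI, of real] by simp
      show ?thesis using e1 e2 e3 e4 e5 e6 by linarith
    qed
    have sB: "(\<Sum>k=1..d. real (card (B k))) = real d * 2 ^ n / 4" using sumB eq by linarith
    have bB: "(\<Sum>i=1..d. real (card (B i))) \<le> real d * 2 ^ n / 4
    \<and> ((\<Sum>i=1..d. real (card (B i))) = real d * 2 ^ n / 4 \<longrightarrow> (\<forall>i\<in>{1..d}. real (card (B i)) = 2 ^ n / 4))"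
      by (rule bound[where d=d and n=n and \<A>=B]) (use assms(1) subB crB in auto)
    have BB: "\<forall>k\<in>{1..d}. real (card (B k)) = 2 ^ n / 4"
      using bB sB by blast
    have AA: "\<forall>k\<in>{1..d}. real (card (\<A> k)) = 2 ^ n / 4" using Bd eq by blast
    have a1: "real (card (\<A> i)) = 2 ^ n / 4" using AA ij(1) by blast
    have b1: "real (card (B i)) = 2 ^ n / 4" using BB ij(1) by blast
    have "real (card (\<A> i)) = real (card (\<A> i \<union> \<A> j))" using a1 b1 unfolding Bi by linarith
    then have c1: "card (\<A> i) = card (\<A> i \<union> \<A> j)" by (simp only: of_nat_eq_iff)
    have "\<A> i = \<A> i \<union> \<A> j"
      by (rule card_subset_eq[OF _ Un_upper1 c1]) (use finA ij in auto)
    then have "\<A> j \<subseteq> \<A> i" by blast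
    moreover have "real (card (\<A> j)) = real (card (\<A> i))" using AA ij(1,2) by (metis (no_types))
    then have "card (\<A> j) = card (\<A> i)" by (simp only: of_nat_eq_iff)
    ultimately have "\<A> j = \<A> i" using card_subset_eq[OF finA[OF ij(1)]] by blast
    then show False using ij(3) by simp
  qed
  then show ?thesis using Bd by linarith
qed

end
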